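(* Let $P,F,A_I,A_O,B_I,B_O,E_A,E_B$ be finite-dimensional Hilbert spaces with $d_{A_I}=d_{A_O}=:d_A$, $d_{B_I}=d_{B_O}=:d_B$, $d_P=d_F=d_Ad_{E_A}=d_Bd_{E_B}$. Let $(\Pi_A,\Phi_A)$ and $(\Pi_B,\Phi_B)$ be consistent frame functions for Alice and Bob, i.e. for all unitaries $U_A:A_I\to A_O$, $U_B:B_I\to B_O$, $\Phi_A(U_B)(U_A\otimes\mathbb{1}^{E_A})\Pi_A(U_B)=\Phi_B(U_A)(U_B\otimes\mathbb{1}^{E_B})\Pi_B(U_A)=:\mathcal{G}(U_A,U_B)$. Let $\{U_i\}_{i=1}^{d_A^2}$, $\{V_j\}_{j=1}^{d_B^2}$ be orthonormal bases of unitaries $A_I\to A_O$ and $B_I\to B_O$, and let $|w\rangle=\frac{1}{d_Ad_B}\sum_{i,j}|\mathcal{G}(U_i,V_j)\rangle\!\rangle^{PF}|U_i^*\rangle\!\rangle^{A_IA_O}|V_j^*\rangle\!\rangle^{B_IB_O}$ be the corresponding process vector. Let $E_I,E_O$ be Hilbert spaces isomorphic to $E_A$. Then $$|w\rangle=\frac{1}{d_B}\,\langle\!\langle\mathbb{1}|^{E_IE_O}\sum_j|\Pi_A(V_j)\rangle\!\rangle^{P,A_IE_I}\,|\Phi_A(V_j)\rangle\!\rangle^{A_OE_O,F}\,|V_j^*\rangle\!\rangle^{B_IB_O}.$$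
   Context: A frame function for Alice is a pair $(\Pi_A,\Phi_A)$ of functions sending linear maps $T_B:B_I\to B_O$ to linear maps $\Pi_A(T_B):P\to A_I\otimes E_A$ and $\Phi_A(T_B):A_O\otimes E_A\to F$, unitary whenever $T_B$ is unitary; Bob's frame function is defined symmetrically with $\Pi_B(T_A):P\to B_I\otimes E_B$, $\Phi_B(T_A):B_O\otimes E_B\to F$. All spaces have fixed computational bases. For a linear map $K:X\to Y$, $|K\rangle\!\rangle^{X,Y}=\sum_i|i\rangle^X\otimes(K|i\rangle)^Y\in X\otimes Y$ (so $|\Pi_A(V)\rangle\!\rangle^{P,A_IE_I}\in P\otimes A_I\otimes E_I$ with the output $E_A$ identified with $E_I$, and $|\Phi_A(V)\rangle\!\rangle^{A_OE_O,F}\in A_O\otimes E_O\otimes F$ with the input $E_A$ identified with $E_O$); $K^*$ is entrywise complex conjugation. $\langle\!\langle\mathbb{1}|^{E_IE_O}$ denotes the bra of $|\mathbb{1}\rangle\!\rangle^{E_IE_O}=\sum_e|e\rangle^{E_I}|e\rangle^{E_O}$ applied (partial inner product) to the $E_I,E_O$ tensor factors, leaving the others. An orthonormal basis of unitaries $X\to Y$ ($d=\dim X=\dim Y$) is a set of $d^2$ unitaries $U_i$ with $\{|U_i\rangle\!\rangle\}$ a basis of $X\otimes Y$ and $\langle\!\langle U_i|U_j\rangle\!\rangle=d\,\delta_{ij}$. *)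

theory Defs
  imports "HOL-Library.Cardinality" Complex_Main
begin

text \<open>Every Hilbert space is a finite type of basis labels (its fixed
computational basis). A linear map K : X \<rightarrow> Y is its matrix
K :: 'y \<Rightarrow> 'x \<Rightarrow> complex, with K y x = <y|K|x>. Tensor products of spaces are
product types. A vector in X1 \<otimes> ... \<otimes> Xn is a function of the n basis labels.\<close>

type_synonym ('x, 'y) lmap = "'y \<Rightarrow> 'x \<Rightarrow> complex"

definition mmult :: "('y, 'z) lmap \<Rightarrow> ('x, 'y) lmap \<Rightarrow> ('x, 'z) lmap"
  where "mmult A B = (\<lambda>z x. \<Sum>y\<in>UNIV. A z y * B y x)"

definition unitary_map :: "('x::finite, 'y::finite) lmap \<Rightarrow> bool" where
  "unitary_map K \<longleftrightarrow>
     (\<forall>x x'. (\<Sum>y\<in>UNIV. cnj (K y x) * K y x') = (if x = x' then 1 else 0)) \<and>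
     (\<forall>y y'. (\<Sum>x\<in>UNIV. K y x * cnj (K y' x)) = (if y = y' then 1 else 0))"

definition tensor_id :: "('x, 'y) lmap \<Rightarrow> ('x \<times> 'e, 'y \<times> 'e) lmap" where
  "tensor_id K = (\<lambda>(y, e) (x, e'). if e = e' then K y x else 0)"

text \<open>|K>>^{X,Y} = \<Sum>_i |i>^X \<otimes> (K|i>)^Y, as a function of (x, y).\<close>
definition dket :: "('x, 'y) lmap \<Rightarrow> 'x \<Rightarrow> 'y \<Rightarrow> complex" where
  "dket K = (\<lambda>x y. K y x)"

definition conj_map :: "('x, 'y) lmap \<Rightarrow> ('x, 'y) lmap" where
  "conj_map K = (\<lambda>y x. cnj (K y x))"

definition frame_function ::
  "(('ti::finite, 'to::finite) lmap \<Rightarrow> ('p::finite, 'i::finite \<times> 'e::finite) lmap) \<Rightarrow>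
   (('ti, 'to) lmap \<Rightarrow> ('o::finite \<times> 'e, 'f::finite) lmap) \<Rightarrow> bool" where
  "frame_function Pi Phi \<longleftrightarrow> (\<forall>T. unitary_map T \<longrightarrow> unitary_map (Pi T) \<and> unitary_map (Phi T))"

definition frame_comp ::
  "(('ti, 'to) lmap \<Rightarrow> ('p, 'i \<times> 'e::finite) lmap) \<Rightarrow>
   (('ti, 'to) lmap \<Rightarrow> ('o \<times> 'e, 'f) lmap) \<Rightarrow> ('i::finite, 'o::finite) lmap \<Rightarrow> ('ti, 'to) lmap
   \<Rightarrow> ('p, 'f) lmap" where
  "frame_comp Pi Phi U T = mmult (Phi T) (mmult (tensor_id U) (Pi T))"

definition orthonormal_unitary_basis :: "(nat \<Rightarrow> ('x::finite, 'y::finite) lmap) \<Rightarrow> bool" where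
  "orthonormal_unitary_basis U \<longleftrightarrow>
     CARD('x) = CARD('y) \<and>
     (\<forall>i < CARD('x)^2. unitary_map (U i)) \<and>
     (\<forall>i < CARD('x)^2. \<forall>j < CARD('x)^2.
        (\<Sum>x\<in>UNIV. \<Sum>y\<in>UNIV. cnj (dket (U i) x y) * dket (U j) x y)
          = (if i = j then of_nat CARD('x) else 0)) \<and>
     (\<forall>v :: 'x \<Rightarrow> 'y \<Rightarrow> complex. \<exists>c. v = (\<lambda>x y. \<Sum>i<CARD('x)^2. c i * dket (U i) x y))"

end

theory Submission
  imports Defs
begin

lemma completeness:
  fixes U :: "nat \<Rightarrow> ('x::finite, 'y::finite) lmap"
  assumes B: "orthonormal_unitary_basis U"
  shows "(\<Sum>i<CARD('x)^2. U i y x * cnj (U i y0 x0))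
         = of_nat CARD('x) * (if x = x0 \<and> y = y0 then 1 else 0)"
proof -
  let ?N = "CARD('x)^2"
  let ?d = "of_nat CARD('x) :: complex"
  have dnz: "?d \<noteq> 0" by simp
  define v :: "'x \<Rightarrow> 'y \<Rightarrow> complex" where "v = (\<lambda>x y. if x = x0 then (if y = y0 then 1 else 0) else 0)"
  from B have "\<exists>c. v = (\<lambda>x y. \<Sum>k<?N. c k * dket (U k) x y)"
    unfolding orthonormal_unitary_basis_def by auto
  then obtain c where c: "v = (\<lambda>x y. \<Sum>k<?N. c k * dket (U k) x y)" by blast
  have orth: "\<And>i k. i < ?N \<Longrightarrow> k < ?N \<Longrightarrow>
      (\<Sum>x\<in>UNIV. \<Sum>y\<in>UNIV. cnj (U i y x) * U k y x) = (if i = k then ?d else 0)"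
    using B unfolding orthonormal_unitary_basis_def dket_def by blast
  have ci: "c i = cnj (U i y0 x0) / ?d" if i: "i < ?N" for i
  proof -
    have "(\<Sum>x\<in>UNIV. \<Sum>y\<in>UNIV. cnj (U i y x) * v x y) = cnj (U i y0 x0)"
    proof -
      have "\<And>x y. cnj (U i y x) * v x y = (if x = x0 then (if y = y0 then cnj (U i y0 x0) else 0) else 0)"
        by (simp add: v_def)
      moreover have "\<And>x. (\<Sum>y\<in>UNIV. if x = x0 then (if y = y0 then cnj (U i y0 x0) else 0) else (0::complex))
          = (if x = x0 then cnj (U i y0 x0) else 0)" by simp
      ultimately show ?thesis by simp
    qed
    moreover have "(\<Sum>x\<in>UNIV. \<Sum>y\<in>UNIV. cnj (U i y x) * v x y)
        = (\<Sum>x\<in>UNIV. \<Sum>y\<in>UNIV. \<Sum>k<?N. c k * (cnj (U i y x) * U k y x))"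
      unfolding c dket_def by (simp add: sum_distrib_left mult.commute mult.left_commute)
    also have "\<dots> = (\<Sum>k<?N. c k * (\<Sum>x\<in>UNIV. \<Sum>y\<in>UNIV. cnj (U i y x) * U k y x))"
      by (simp add: sum_distrib_left sum.swap[of _ "{..<?N}"])
    also have "\<dots> = (\<Sum>k<?N. c k * (if i = k then ?d else 0))"
      by (rule sum.cong) (auto simp: orth i)
    also have "\<dots> = c i * ?d" using i by (simp add: if_distrib cong: if_cong)
    finally show ?thesis using dnz by (simp add: field_simps)
  qed
  have "v x y = (\<Sum>k<?N. c k * U k y x)" unfolding c dket_def by simp
  also have "\<dots> = (\<Sum>k<?N. U k y x * cnj (U k y0 x0)) / ?d"
    by (simp add: ci sum_divide_distrib mult.commute)
  finally have "?d * v x y = (\<Sum>k<?N. U k y x * cnj (U k y0 x0))" using dnz by (simp add: field_simps)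
  then show ?thesis unfolding v_def by (auto split: if_splits)
qed

lemma frame_comp_expand:
  "frame_comp Pi Phi W T f p =
     (\<Sum>ob\<in>UNIV. \<Sum>a\<in>UNIV. W ob a * (\<Sum>e\<in>UNIV. Phi T f (ob, e) * Pi T (a, e) p))"
proof -
  have "frame_comp Pi Phi W T f p = (\<Sum>oe\<in>UNIV. Phi T f oe * (\<Sum>ae\<in>UNIV. tensor_id W oe ae * Pi T ae p))"
    unfolding frame_comp_def mmult_def by simp
  also have "\<dots> = (\<Sum>ob\<in>UNIV. \<Sum>e\<in>UNIV. Phi T f (ob,e) * (\<Sum>a\<in>UNIV. W ob a * Pi T (a, e) p))"
  proof -
    have "\<And>ob e. (\<Sum>ae\<in>UNIV. tensor_id W (ob,e) ae * Pi T ae p) = (\<Sum>a\<in>UNIV. W ob a * Pi T (a, e) p)"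
    proof -
      fix ob e
      have "(\<Sum>ae\<in>UNIV. tensor_id W (ob,e) ae * Pi T ae p) = (\<Sum>a\<in>UNIV. \<Sum>e'\<in>UNIV. tensor_id W (ob,e) (a,e') * Pi T (a,e') p)"
        by (simp add: UNIV_Times_UNIV[symmetric] sum.cartesian_product del: UNIV_Times_UNIV)
      also have "\<dots> = (\<Sum>a\<in>UNIV. W ob a * Pi T (a, e) p)"
        by (simp add: tensor_id_def if_distrib[where f="\<lambda>z. z * _"] cong: if_cong)
      finally show "?thesis ob e" .
    qed
    then have "\<And>oe. Phi T f oe * (\<Sum>ae\<in>UNIV. tensor_id W oe ae * Pi T ae p) = (case oe of (ob,e) \<Rightarrow> Phi T f (ob,e) * (\<Sum>a\<in>UNIV. W ob a * Pi T (a, e) p))"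
      by (auto split: prod.splits)
    then show ?thesis
      by (simp add: UNIV_Times_UNIV[symmetric] sum.cartesian_product del: UNIV_Times_UNIV)
  qed
  also have "\<dots> = (\<Sum>ob\<in>UNIV. \<Sum>a\<in>UNIV. W ob a * (\<Sum>e\<in>UNIV. Phi T f (ob, e) * Pi T (a, e) p))"
    by (simp add: sum_distrib_left sum.swap[of _ "UNIV::'c set"] mult.commute mult.left_commute)
  finally show ?thesis .
qed

lemma per_j:
  fixes U :: "nat \<Rightarrow> ('ai::finite, 'ao::finite) lmap"
  assumes B: "orthonormal_unitary_basis U"
  shows "(\<Sum>i<CARD('ai)^2. frame_comp Pi Phi (U i) T f p * cnj (U i ao ai))
       = of_nat CARD('ai) * (\<Sum>e\<in>UNIV. Pi T (ai, e) p * Phi T f (ao, e))"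
proof -
  define M where "M = (\<lambda>ob a. \<Sum>e\<in>UNIV. Phi T f (ob, e) * Pi T (a, e) p)"
  have "(\<Sum>i<CARD('ai)^2. frame_comp Pi Phi (U i) T f p * cnj (U i ao ai))
      = (\<Sum>i<CARD('ai)^2. \<Sum>ob\<in>UNIV. \<Sum>a\<in>UNIV. M ob a * (U i ob a * cnj (U i ao ai)))"
    unfolding frame_comp_expand M_def by (simp add: sum_distrib_left sum_distrib_right mult_ac)
  also have "\<dots> = (\<Sum>ob\<in>UNIV. \<Sum>a\<in>UNIV. M ob a * (\<Sum>i<CARD('ai)^2. U i ob a * cnj (U i ao ai)))"
    by (simp add: sum_distrib_left sum.swap[of _ "{..<CARD('ai)^2}"])
  also have "\<dots> = (\<Sum>ob\<in>UNIV. \<Sum>a\<in>UNIV. M ob a * (of_nat CARD('ai) * (if a = ai \<and> ob = ao then 1 else 0)))"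
    by (simp add: completeness[OF B])
  also have "\<dots> = of_nat CARD('ai) * M ao ai"
  proof -
    have "\<And>ob a. M ob a * (of_nat CARD('ai) * (if a = ai \<and> ob = ao then 1 else 0))
       = (if ob = ao then (if a = ai then of_nat CARD('ai) * M ao ai else 0) else 0)" by auto
    moreover have "\<And>ob. (\<Sum>a\<in>UNIV. if ob = ao then (if a = ai then of_nat CARD('ai) * M ao ai else 0) else (0::complex))
       = (if ob = ao then of_nat CARD('ai) * M ao ai else 0)" by simp
    ultimately show ?thesis by simp
  qed
  finally show ?thesis unfolding M_def by (simp add: mult.commute)
qed

theorem theorem3:
  fixes PiA :: "('bi::finite, 'bo::finite) lmap \<Rightarrow> ('p::finite, 'ai::finite \<times> 'ea::finite) lmap"
    and PhiA :: "('bi, 'bo) lmap \<Rightarrow> ('ao::finite \<times> 'ea, 'f::finite) lmap"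
    and PiB :: "('ai, 'ao) lmap \<Rightarrow> ('p, 'bi \<times> 'eb::finite) lmap"
    and PhiB :: "('ai, 'ao) lmap \<Rightarrow> ('bo \<times> 'eb, 'f) lmap"
    and U :: "nat \<Rightarrow> ('ai, 'ao) lmap"
    and V :: "nat \<Rightarrow> ('bi, 'bo) lmap"
  assumes dimA: "CARD('ai) = CARD('ao)"
    and dimB: "CARD('bi) = CARD('bo)"
    and dimPF: "CARD('p) = CARD('f)"
    and dimPA: "CARD('p) = CARD('ai) * CARD('ea)"
    and dimPB: "CARD('p) = CARD('bi) * CARD('eb)"
    and frameA: "frame_function PiA PhiA"
    and frameB: "frame_function PiB PhiB"
    and consistent: "\<And>UA UB. unitary_map UA \<Longrightarrow> unitary_map UB \<Longrightarrow>
        frame_comp PiA PhiA UA UB = frame_comp PiB PhiB UB UA"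
    and basisU: "orthonormal_unitary_basis U"
    and basisV: "orthonormal_unitary_basis V"
  shows "(\<lambda>(p::'p) (f::'f) (ai::'ai) (ao::'ao) (bi::'bi) (bo::'bo).
            (1 / (of_nat CARD('ai) * of_nat CARD('bi))) *
            (\<Sum>i<CARD('ai)^2. \<Sum>j<CARD('bi)^2.
               dket (frame_comp PiA PhiA (U i) (V j)) p f *
               dket (conj_map (U i)) ai ao * dket (conj_map (V j)) bi bo))
       = (\<lambda>p f ai ao bi bo.
            (1 / of_nat CARD('bi)) *
            (\<Sum>j<CARD('bi)^2. \<Sum>e\<in>(UNIV::'ea set).
               dket (PiA (V j)) p (ai, e) * dket (PhiA (V j)) (ao, e) f *
               dket (conj_map (V j)) bi bo))"
proof (intro ext)
  fix p f ai ao bi bo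
  let ?G = "\<lambda>i j. frame_comp PiA PhiA (U i) (V j) f p"
  have "(\<Sum>i<CARD('ai)^2. \<Sum>j<CARD('bi)^2.
               dket (frame_comp PiA PhiA (U i) (V j)) p f *
               dket (conj_map (U i)) ai ao * dket (conj_map (V j)) bi bo)
     = (\<Sum>j<CARD('bi)^2. (\<Sum>i<CARD('ai)^2. ?G i j * cnj (U i ao ai)) * cnj (V j bo bi))"
    unfolding dket_def conj_map_def
    by (simp add: sum.swap[of _ "{..<CARD('ai)^2}"] sum_distrib_right)
  also have "\<dots> = (\<Sum>j<CARD('bi)^2. of_nat CARD('ai) * (\<Sum>e\<in>UNIV. PiA (V j) (ai, e) p * PhiA (V j) f (ao, e)) * cnj (V j bo bi))"
    by (simp add: per_j[OF basisU])
  finally have eq: "(\<Sum>i<CARD('ai)^2. \<Sum>j<CARD('bi)^2.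
               dket (frame_comp PiA PhiA (U i) (V j)) p f *
               dket (conj_map (U i)) ai ao * dket (conj_map (V j)) bi bo)
     = of_nat CARD('ai) * (\<Sum>j<CARD('bi)^2. \<Sum>e\<in>UNIV.
               dket (PiA (V j)) p (ai, e) * dket (PhiA (V j)) (ao, e) f *
               dket (conj_map (V j)) bi bo)"
    unfolding dket_def conj_map_def
    by (simp add: sum_distrib_left sum_distrib_right mult.assoc)
  show "(1 / (of_nat CARD('ai) * of_nat CARD('bi))) *
            (\<Sum>i<CARD('ai)^2. \<Sum>j<CARD('bi)^2.
               dket (frame_comp PiA PhiA (U i) (V j)) p f *
               dket (conj_map (U i)) ai ao * dket (conj_map (V j)) bi bo)
       = (1 / of_nat CARD('bi)) *
            (\<Sum>j<CARD('bi)^2. \<Sum>e\<in>(UNIV::'ea set).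
               dket (PiA (V j)) p (ai, e) * dket (PhiA (V j)) (ao, e) f *
               dket (conj_map (V j)) bi bo)"
    unfolding eq by simp
qed

end
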